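(* Let $X=\{(u,v)\in\mathbb{R}^2:uv>0\}\cup\{\theta\}$ with $\theta=(0,0)$, equipped with the relative Euclidean topology $\tau$ and the coordinatewise partial order $\preceq$. Then $(X,\tau,\preceq)$ is a partially ordered topological space, and: (a) $\theta$ is neither a $\preceq$-upper singular point nor a $\preceq$-upper compact bounded point; (b) the map $x^\downarrow\mapsto x$ from $(C^\downarrow(X),\tau_F)$ to $(X,\tau)$ is not continuous at $\theta^\downarrow$.
   Context: A partially ordered topological space is a topological space with a partial order whose graph is closed in $X\times X$. $x^\downarrow=\{u\in X:u\preceq x\}$, $x^\uparrow=\{u\in X:x\preceq u\}$ (taken inside $X$). $C(X)$ = closed subsets of $X$, $C^\downarrow(X)=\{x^\downarrow:x\in X\}$; the Fell topology $\tau_F$ on $C(X)$ is generated by the sets $\{A:A\cap O\neq\emptyset\}$ ($O$ open) and $\{A:A\cap D=\emptyset\}$ ($D$ compact), and $C^\downarrow(X)$ carries the relative topology. $x$ is a $\preceq$-upper singular point if for every open neighborhood $O$ of $x$ there is an open neighborhood $O_1\subseteq O$ of $x$ with no $y\in X\setminus O_1$ satisfying $u\preceq y$ for some $u\in O_1$. $x$ is a $\preceq$-upper compact bounded point if for every open neighborhood $O$ of $x$ there are $a,b\in O$, $b\preceq a$, with $b^\uparrow\cap a^\downarrow\subseteq O$, $x\in\mathrm{int}(b^\uparrow\cap a^\downarrow)$, and $(b^\uparrow\cap a^\downarrow)\setminus\mathrm{int}\,a^\downarrow$ nonempty and compact. *)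

theory Defs
  imports "HOL-Analysis.Analysis"
begin

definition pots :: "'a topology \<Rightarrow> ('a \<Rightarrow> 'a \<Rightarrow> bool) \<Rightarrow> bool" where
  "pots T le \<longleftrightarrow>
     (\<forall>x\<in>topspace T. le x x) \<and>
     (\<forall>x\<in>topspace T. \<forall>y\<in>topspace T. le x y \<and> le y x \<longrightarrow> x = y) \<and>
     (\<forall>x\<in>topspace T. \<forall>y\<in>topspace T. \<forall>z\<in>topspace T. le x y \<and> le y z \<longrightarrow> le x z) \<and>
     closedin (prod_topology T T) {(x, y). x \<in> topspace T \<and> y \<in> topspace T \<and> le x y}"

definition down :: "'a topology \<Rightarrow> ('a \<Rightarrow> 'a \<Rightarrow> bool) \<Rightarrow> 'a \<Rightarrow> 'a set" where
  "down T le x = {u \<in> topspace T. le u x}"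

definition up :: "'a topology \<Rightarrow> ('a \<Rightarrow> 'a \<Rightarrow> bool) \<Rightarrow> 'a \<Rightarrow> 'a set" where
  "up T le x = {u \<in> topspace T. le x u}"

definition upper_singular :: "'a topology \<Rightarrow> ('a \<Rightarrow> 'a \<Rightarrow> bool) \<Rightarrow> 'a \<Rightarrow> bool" where
  "upper_singular T le x \<longleftrightarrow>
     (\<forall>W. openin T W \<and> x \<in> W \<longrightarrow>
        (\<exists>O1. openin T O1 \<and> x \<in> O1 \<and> O1 \<subseteq> W \<and>
              \<not> (\<exists>y \<in> topspace T - O1. \<exists>u \<in> O1. le u y)))"

definition upper_compact_bounded :: "'a topology \<Rightarrow> ('a \<Rightarrow> 'a \<Rightarrow> bool) \<Rightarrow> 'a \<Rightarrow> bool" where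
  "upper_compact_bounded T le x \<longleftrightarrow>
     (\<forall>W. openin T W \<and> x \<in> W \<longrightarrow>
        (\<exists>a b. a \<in> W \<and> b \<in> W \<and> le b a \<and>
           up T le b \<inter> down T le a \<subseteq> W \<and>
           x \<in> T interior_of (up T le b \<inter> down T le a) \<and>
           (up T le b \<inter> down T le a) - T interior_of (down T le a) \<noteq> {} \<and>
           compactin T ((up T le b \<inter> down T le a) - T interior_of (down T le a))))"

definition fell_subbasis :: "'a topology \<Rightarrow> 'a set set set" where
  "fell_subbasis T =
     {{A. A \<inter> W \<noteq> {}} | W. openin T W} \<union> {{A. A \<inter> D = {}} | D. compactin T D}"

definition fell :: "'a topology \<Rightarrow> 'a set topology" where
  "fell T = subtopology (topology_generated_by (fell_subbasis T)) {A. closedin T A}"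

definition Cdown :: "'a topology \<Rightarrow> ('a \<Rightarrow> 'a \<Rightarrow> bool) \<Rightarrow> 'a set set" where
  "Cdown T le = down T le ` topspace T"

definition continuous_at_point :: "'a topology \<Rightarrow> 'b topology \<Rightarrow> ('a \<Rightarrow> 'b) \<Rightarrow> 'a \<Rightarrow> bool" where
  "continuous_at_point S T f p \<longleftrightarrow>
     (\<forall>V. openin T V \<and> f p \<in> V \<longrightarrow> (\<exists>U. openin S U \<and> p \<in> U \<and> f ` U \<subseteq> V))"

definition Xex :: "(real \<times> real) set" where
  "Xex = {(u, v). u * v > 0} \<union> {(0, 0)}"

definition coord_le :: "real \<times> real \<Rightarrow> real \<times> real \<Rightarrow> bool" where
  "coord_le p q \<longleftrightarrow> fst p \<le> fst q \<and> snd p \<le> snd q"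

end

theory Submission
  imports Defs
begin

lemma near_pt:
  assumes "open V" "(x::real, y::real) \<in> V"
  shows "\<exists>e>0. \<forall>s t. \<bar>s - x\<bar> < e \<and> \<bar>t - y\<bar> < e \<longrightarrow> (s, t) \<in> V"
proof -
  obtain A B where AB: "open A" "open B" "(x,y) \<in> A \<times> B" "A \<times> B \<subseteq> V"
    using open_prod_elim[OF assms] by blast
  obtain e1 where e1: "e1 > 0" "\<forall>s. dist s x < e1 \<longrightarrow> s \<in> A"
    using AB open_dist by (metis mem_Sigma_iff)
  obtain e2 where e2: "e2 > 0" "\<forall>s. dist s y < e2 \<longrightarrow> s \<in> B"
    using AB open_dist by (metis mem_Sigma_iff)
  show ?thesis
    apply (rule exI[of _ "min e1 e2"])
    using e1 e2 AB(4) by (auto simp: dist_real_def)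
qed

lemma openinT:
  assumes "openin (subtopology euclidean Xex) U"
  obtains V where "open V" "U = V \<inter> Xex"
  using assms by (metis Int_commute open_openin openin_subtopology)

lemma openW: "open {p::real\<times>real. snd p < 1}"
  by (intro open_Collect_less continuous_intros)

lemma topT: "topspace (subtopology euclidean Xex) = Xex" by simp

lemma Xex_cases: "p \<in> Xex \<Longrightarrow> p = (0,0) \<or> (fst p > 0 \<and> snd p > 0) \<or> (fst p < 0 \<and> snd p < 0)"
  by (cases p) (auto simp: Xex_def zero_less_mult_iff)

theorem mainTheorem3:
  defines "T \<equiv> subtopology euclidean Xex"
  shows "pots T coord_le \<and>
         \<not> upper_singular T coord_le (0, 0) \<and>
         \<not> upper_compact_bounded T coord_le (0, 0) \<and>
         \<not> continuous_at_point (subtopology (fell T) (Cdown T coord_le)) T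
              (\<lambda>A. THE x. x \<in> topspace T \<and> down T coord_le x = A)
              (down T coord_le (0, 0))"
proof (intro conjI)
  have tT: "topspace T = Xex" unfolding T_def by simp
  have th: "(0::real,0::real) \<in> Xex" by (simp add: Xex_def)
  show "pots T coord_le"
  proof -
    have cl: "closed {p::(real\<times>real)\<times>(real\<times>real). fst (fst p) \<le> fst (snd p) \<and> snd (fst p) \<le> snd (snd p)}"
      by (intro closed_Collect_conj closed_Collect_le continuous_intros)
    have eq: "{(x, y). x \<in> Xex \<and> y \<in> Xex \<and> coord_le x y} =
      {p::(real\<times>real)\<times>(real\<times>real). fst (fst p) \<le> fst (snd p) \<and> snd (fst p) \<le> snd (snd p)} \<inter> (Xex \<times> Xex)"
      by (auto simp: coord_le_def)
    have "closedin (subtopology euclidean (Xex \<times> Xex)) {(x, y). x \<in> Xex \<and> y \<in> Xex \<and> coord_le x y}"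
      unfolding closedin_subtopology eq using cl closed_closedin by blast
    then show ?thesis unfolding pots_def tT unfolding T_def
      by (auto simp: coord_le_def prod_eq_iff)
  qed
  show "\<not> upper_singular T coord_le (0, 0)"
  proof
    assume us: "upper_singular T coord_le (0, 0)"
    let ?W = "{p \<in> Xex. snd p < 1}"
    have "openin T ?W" unfolding T_def openin_subtopology
      by (rule exI[of _ "{p. snd p < (1::real)}"]) (auto intro: openW)
    then obtain O1 where O1: "openin T O1" "(0,0) \<in> O1" "O1 \<subseteq> ?W"
       "\<not> (\<exists>y \<in> topspace T - O1. \<exists>u \<in> O1. coord_le u y)"
      using us th unfolding upper_singular_def by force
    obtain V where V: "open V" "O1 = V \<inter> Xex" using O1(1) openinT T_def by metis
    obtain e where e: "e > 0" "\<forall>s t. \<bar>s - 0\<bar> < e \<and> \<bar>t - 0\<bar> < e \<longrightarrow> (s, t) \<in> V"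
      using near_pt[OF V(1)] O1(2) V(2) by blast
    define d where "d = min (e/2) 1"
    have d: "d > 0" "d < e" "d \<le> 1" using e by (auto simp: d_def)
    have "(d,d) \<in> O1" using e d V(2) by (auto simp: Xex_def)
    moreover have "(2,2) \<in> topspace T - O1" using O1(3) tT by (auto simp: Xex_def)
    moreover have "coord_le (d,d) (2,2)" using d by (auto simp: coord_le_def)
    ultimately show False using O1(4) by blast
  qed
  show "\<not> upper_compact_bounded T coord_le (0, 0)"
  proof
    assume ucb: "upper_compact_bounded T coord_le (0, 0)"
    have "openin T Xex" unfolding T_def by (metis openin_topspace topT)
    then obtain a b where ab: "(0,0) \<in> T interior_of (up T coord_le b \<inter> down T coord_le a)"
      "compactin T ((up T coord_le b \<inter> down T coord_le a) - T interior_of (down T coord_le a))"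
      using ucb th unfolding upper_compact_bounded_def by blast
    obtain U where U: "openin T U" "(0,0) \<in> U" "U \<subseteq> up T coord_le b \<inter> down T coord_le a"
      using ab(1) unfolding interior_of_def by blast
    obtain V where V: "open V" "U = V \<inter> Xex" using U(1) openinT T_def by metis
    obtain e where e: "e > 0" "\<forall>s t. \<bar>s - 0\<bar> < e \<and> \<bar>t - 0\<bar> < e \<longrightarrow> (s, t) \<in> V"
      using near_pt[OF V(1)] U(2) V(2) by blast
    have "(e/2,e/2) \<in> U" "(-e/2,-e/2) \<in> U" using e V(2) by (auto simp: Xex_def)
    then have p1: "coord_le (e/2,e/2) a" and p2: "coord_le b (-e/2,-e/2)"
      using U(3) by (auto simp: up_def down_def)
    have a: "fst a > 0" "snd a > 0" using p1 e by (auto simp: coord_le_def)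
    have b: "fst b < 0" "snd b < 0" using p2 e by (auto simp: coord_le_def)
    define K where "K = (up T coord_le b \<inter> down T coord_le a) - T interior_of (down T coord_le a)"
    have inK: "(fst a, t) \<in> K" if t: "0 < t" "t \<le> snd a" for t
    proof -
      have X: "(fst a, t) \<in> Xex" using a t by (auto simp: Xex_def)
      have "(fst a, t) \<notin> T interior_of (down T coord_le a)"
      proof
        assume "(fst a, t) \<in> T interior_of (down T coord_le a)"
        then obtain U2 where U2: "openin T U2" "(fst a, t) \<in> U2" "U2 \<subseteq> down T coord_le a"
          unfolding interior_of_def by blast
        obtain V2 where V2: "open V2" "U2 = V2 \<inter> Xex" using U2(1) openinT T_def by metis
        obtain e2 where e2: "e2 > 0" "\<forall>s r. \<bar>s - fst a\<bar> < e2 \<and> \<bar>r - t\<bar> < e2 \<longrightarrow> (s, r) \<in> V2"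
          using near_pt[OF V2(1)] U2(2) V2(2) by blast
        have "(fst a + e2/2, t) \<in> U2" using e2 V2(2) a t by (auto simp: Xex_def)
        then show False using U2(3) e2 by (auto simp: down_def coord_le_def)
      qed
      then show ?thesis unfolding K_def using X t a b tT
        by (auto simp: up_def down_def coord_le_def)
    qed
    have "compact K" using ab(2) unfolding K_def T_def compactin_subtopology by simp
    then have "open (- K)" using compact_imp_closed by blast
    moreover have "(fst a, 0) \<notin> K"
    proof
      assume "(fst a, 0) \<in> K"
      then have "(fst a, 0) \<in> Xex" unfolding K_def using tT by (auto simp: up_def)
      then show False using a by (auto simp: Xex_def)
    qed
    ultimately obtain e3 where e3: "e3 > 0" "\<forall>s r. \<bar>s - fst a\<bar> < e3 \<and> \<bar>r - 0\<bar> < e3 \<longrightarrow> (s, r) \<in> - K"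
      using near_pt by blast
    have "(fst a, min (e3/2) (snd a)) \<in> K" using a e3 by (intro inK) auto
    moreover have "(fst a, min (e3/2) (snd a)) \<in> - K" using e3 a by auto
    ultimately show False by blast
  qed
  show "\<not> continuous_at_point (subtopology (fell T) (Cdown T coord_le)) T
              (\<lambda>A. THE x. x \<in> topspace T \<and> down T coord_le x = A)
              (down T coord_le (0, 0))"
  proof
    assume ct: "continuous_at_point (subtopology (fell T) (Cdown T coord_le)) T
              (\<lambda>A. THE x. x \<in> topspace T \<and> down T coord_le x = A)
              (down T coord_le (0, 0))"
    have the_eq: "(THE y. y \<in> topspace T \<and> down T coord_le y = down T coord_le x) = x"
      if x: "x \<in> Xex" for x
    proof (rule the_equality)
      show "x \<in> topspace T \<and> down T coord_le x = down T coord_le x" using x tT by simp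
    next
      fix y assume y: "y \<in> topspace T \<and> down T coord_le y = down T coord_le x"
      have "x \<in> down T coord_le x" "y \<in> down T coord_le y" using x y tT
        by (auto simp: down_def coord_le_def)
      then have "x \<in> down T coord_le y" "y \<in> down T coord_le x" using y by auto
      then have "coord_le x y" "coord_le y x" by (auto simp: down_def)
      then show "y = x" by (auto simp: coord_le_def prod_eq_iff)
    qed
    let ?W = "{p \<in> Xex. snd p < 1}"
    have Wo: "openin T ?W" unfolding T_def openin_subtopology
      by (rule exI[of _ "{p. snd p < (1::real)}"]) (auto intro: openW)
    have "(THE y. y \<in> topspace T \<and> down T coord_le y = down T coord_le (0,0)) \<in> ?W"
      using the_eq[OF th] th by simp
    then obtain U where U: "openin (subtopology (fell T) (Cdown T coord_le)) U"
      "down T coord_le (0,0) \<in> U"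
      "(\<lambda>A. THE x. x \<in> topspace T \<and> down T coord_le x = A) ` U \<subseteq> ?W"
      using ct Wo unfolding continuous_at_point_def by blast
    obtain G where G: "generate_topology_on (fell_subbasis T) G"
       "U = G \<inter> {A. closedin T A} \<inter> Cdown T coord_le"
      using U(1) unfolding fell_def openin_subtopology openin_topology_generated_by_iff
      by (metis Int_assoc)
    have key: "down T coord_le (0,0) \<in> G \<longrightarrow>
       (\<exists>d>0. \<forall>x1 x2. 0 < x1 \<and> x1 < d \<and> 0 < x2 \<longrightarrow> down T coord_le (x1,x2) \<in> G)"
      using G(1)
    proof (induction rule: generate_topology_on.induct)
      case Empty
      then show ?case by simp
    next
      case (Int a b)
      show ?case
      proof
        assume "down T coord_le (0, 0) \<in> a \<inter> b"
        then obtain d1 d2 where "d1 > 0" "d2 > 0"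
          "\<forall>x1 x2. 0 < x1 \<and> x1 < d1 \<and> 0 < x2 \<longrightarrow> down T coord_le (x1,x2) \<in> a"
          "\<forall>x1 x2. 0 < x1 \<and> x1 < d2 \<and> 0 < x2 \<longrightarrow> down T coord_le (x1,x2) \<in> b"
          using Int.IH by blast
        then show "\<exists>d>0. \<forall>x1 x2. 0 < x1 \<and> x1 < d \<and> 0 < x2 \<longrightarrow> down T coord_le (x1,x2) \<in> a \<inter> b"
          by (intro exI[of _ "min d1 d2"]) auto
      qed
    next
      case (UN K)
      show ?case
      proof
        assume "down T coord_le (0, 0) \<in> \<Union>K"
        then obtain k where "k \<in> K" "down T coord_le (0, 0) \<in> k" by blast
        then show "\<exists>d>0. \<forall>x1 x2. 0 < x1 \<and> x1 < d \<and> 0 < x2 \<longrightarrow> down T coord_le (x1,x2) \<in> \<Union>K"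
          using UN.IH by blast
      qed
    next
      case (Basis s)
      show ?case
      proof
        assume s0: "down T coord_le (0, 0) \<in> s"
        have sub: "down T coord_le (0,0) \<subseteq> down T coord_le (x1,x2)" if "0 < x1" "0 < x2" for x1 x2
          using that by (auto simp: down_def coord_le_def)
        from Basis consider (hit) W where "s = {A. A \<inter> W \<noteq> {}}" | (miss) D where "s = {A. A \<inter> D = {}}" "compactin T D"
          unfolding fell_subbasis_def by blast
        then show "\<exists>d>0. \<forall>x1 x2. 0 < x1 \<and> x1 < d \<and> 0 < x2 \<longrightarrow> down T coord_le (x1,x2) \<in> s"
        proof cases
          case hit
          have "\<forall>x1 x2. 0 < x1 \<and> x1 < 1 \<and> 0 < x2 \<longrightarrow> down T coord_le (x1,x2) \<in> s"
          proof (intro allI impI)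
            fix x1 x2 :: real assume "0 < x1 \<and> x1 < 1 \<and> 0 < x2"
            then have "down T coord_le (0,0) \<subseteq> down T coord_le (x1,x2)" using sub by blast
            moreover have "down T coord_le (0,0) \<inter> W \<noteq> {}" using s0 hit by simp
            ultimately have "down T coord_le (x1,x2) \<inter> W \<noteq> {}" by blast
            then show "down T coord_le (x1,x2) \<in> s" using hit by simp
          qed
          then show ?thesis by (intro exI[of _ 1]) simp
        next
          case miss
          have DX: "D \<subseteq> Xex" using miss(2) compactin_subset_topspace tT by blast
          have Dpos: "fst p > 0 \<and> snd p > 0" if p: "p \<in> D" for p
          proof -
            have "p \<notin> down T coord_le (0,0)" using s0 miss(1) p by blast
            moreover have pX: "p \<in> Xex" using DX p by blast
            ultimately have n: "\<not> (fst p \<le> 0 \<and> snd p \<le> 0)" using tT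
              by (auto simp: down_def coord_le_def)
            from Xex_cases[OF pX] n show ?thesis by auto
          qed
          show ?thesis
          proof (cases "D = {}")
            case True
            then show ?thesis using miss by (intro exI[of _ 1]) auto
          next
            case False
            have "compact D" using miss(2) unfolding T_def compactin_subtopology by simp
            then have "compact (fst ` D)" by (intro compact_continuous_image continuous_intros)
            then obtain m where m: "m \<in> fst ` D" "\<forall>z \<in> fst ` D. m \<le> z"
              using compact_attains_inf False by blast
            have "m > 0" using m(1) Dpos by auto
            moreover have "down T coord_le (x1,x2) \<in> s" if "0 < x1" "x1 < m" for x1 x2
            proof -
              have "down T coord_le (x1,x2) \<inter> D = {}"
              proof (rule ccontr)
                assume "down T coord_le (x1,x2) \<inter> D \<noteq> {}"
                then obtain p where "p \<in> D" "coord_le p (x1,x2)" by (auto simp: down_def)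
                then show False using m(2) that by (auto simp: coord_le_def)
              qed
              then show ?thesis using miss(1) by simp
            qed
            ultimately show ?thesis by blast
          qed
        qed
      qed
    qed
    have "down T coord_le (0,0) \<in> G" using U(2) G(2) by blast
    then obtain d where d: "d > 0" "\<forall>x1 x2. 0 < x1 \<and> x1 < d \<and> 0 < x2 \<longrightarrow> down T coord_le (x1,x2) \<in> G"
      using key by blast
    define x where "x = (d/2, 2::real)"
    have xX: "x \<in> Xex" using d by (simp add: x_def Xex_def)
    have "closedin T (down T coord_le x)"
    proof -
      have "closed {p::real\<times>real. fst p \<le> fst x \<and> snd p \<le> snd x}"
        by (intro closed_Collect_conj closed_Collect_le continuous_intros)
      moreover have "down T coord_le x = {p::real\<times>real. fst p \<le> fst x \<and> snd p \<le> snd x} \<inter> Xex"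
        using tT by (auto simp: down_def coord_le_def)
      ultimately show ?thesis unfolding T_def closedin_subtopology using closed_closedin by blast
    qed
    moreover have "down T coord_le x \<in> G" using d by (auto simp: x_def)
    moreover have "down T coord_le x \<in> Cdown T coord_le" using xX tT by (simp add: Cdown_def)
    ultimately have "down T coord_le x \<in> U" using G(2) by blast
    then have "(THE y. y \<in> topspace T \<and> down T coord_le y = down T coord_le x) \<in> ?W"
      using U(3) by blast
    then show False using the_eq[OF xX] by (simp add: x_def)
  qed
qed

end
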